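(* Let $\mu$ be an admissible measure on $\mathbb R$ and $m:=\mu(\mathbb R)$. Then \[ 1-m\le T(\mu)\le\sqrt{1-m^2}, \] where $T(\mu):=\frac12\int_{\mathbb R}|e^x-e^{-x}|\,\mu(dx)$.
   Context: A finitely supported positive measure $\mu$ on $\mathbb R$ is called admissible if $\int e^x\,\mu(dx)=\int e^{-x}\,\mu(dx)=1$. *)

theory Defs
  imports "HOL-Analysis.Analysis"
begin

text \<open>A finitely supported positive measure on the reals is represented by its
  weight function w (w x = mass of the atom at x), which is nonnegative and
  vanishes outside a finite set.\<close>

definition fin_supp_measure :: "(real \<Rightarrow> real) \<Rightarrow> bool" where
  "fin_supp_measure w \<longleftrightarrow> (\<forall>x. 0 \<le> w x) \<and> finite {x. w x \<noteq> 0}"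

definition integ :: "(real \<Rightarrow> real) \<Rightarrow> (real \<Rightarrow> real) \<Rightarrow> real" where
  "integ w f = (\<Sum>x\<in>{x. w x \<noteq> 0}. f x * w x)"

definition total_mass :: "(real \<Rightarrow> real) \<Rightarrow> real" where
  "total_mass w = integ w (\<lambda>_. 1)"

definition admissible :: "(real \<Rightarrow> real) \<Rightarrow> bool" where
  "admissible w \<longleftrightarrow> fin_supp_measure w \<and> integ w exp = 1 \<and> integ w (\<lambda>x. exp (- x)) = 1"

definition T :: "(real \<Rightarrow> real) \<Rightarrow> real" where
  "T w = 1/2 * integ w (\<lambda>x. \<bar>exp x - exp (- x)\<bar>)"

end

theory Submission
  imports Defs
begin

lemma sq_aux: "1 + (\<bar>a - b\<bar> / 2)^2 = ((a + b) / 2)^2" if "a * b = 1" for a b :: real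
proof -
  have "4 + (a - b)^2 = (a + b)^2" using that by (simp add: power2_eq_square algebra_simps)
  then show ?thesis by (simp add: power_divide power2_abs)
qed

lemma low_aux: "(a + b) / 2 \<le> \<bar>a - b\<bar> / 2 + 1" if "a > 0" "b > 0" "a * b = 1" for a b :: real
proof (cases "a \<le> 1")
  case True thus ?thesis by (auto simp: abs_if field_simps)
next
  case False
  then have "b \<le> 1" using that
    by (metis less_eq_real_def mult_le_cancel_left1 mult_less_cancel_left_pos not_le)
  thus ?thesis by (auto simp: abs_if field_simps)
qed

lemma norm_aux: "norm (Complex (w::real) (s * w)) = sqrt (w^2 * (1 + s^2))"
  by (simp add: cmod_def power_mult_distrib algebra_simps)

theorem lemma6:
  fixes w :: "real \<Rightarrow> real"
  assumes "admissible w"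
  shows "1 - total_mass w \<le> T w \<and> T w \<le> sqrt (1 - (total_mass w)\<^sup>2)"
proof -
  define S where "S = {x. w x \<noteq> 0}"
  have fin: "finite S" and wpos: "\<And>x. 0 \<le> w x"
    using assms unfolding admissible_def fin_supp_measure_def S_def by auto
  have e1: "(\<Sum>x\<in>S. exp x * w x) = 1" and e2: "(\<Sum>x\<in>S. exp (-x) * w x) = 1"
    using assms unfolding admissible_def integ_def S_def by auto
  define s where "s (x::real) = \<bar>exp x - exp (-x)\<bar> / 2" for x
  define c where "c (x::real) = (exp x + exp (-x)) / 2" for x
  have m: "total_mass w = (\<Sum>x\<in>S. w x)"
    unfolding total_mass_def integ_def S_def by simp
  have Tw: "T w = (\<Sum>x\<in>S. s x * w x)"
    unfolding T_def integ_def S_def s_def by (simp add: sum_distrib_left)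
  have csum: "(\<Sum>x\<in>S. c x * w x) = 1"
  proof -
    have "(\<Sum>x\<in>S. c x * w x) = ((\<Sum>x\<in>S. exp x * w x) + (\<Sum>x\<in>S. exp (-x) * w x)) / 2"
    proof -
      have "(\<Sum>x\<in>S. c x * w x) = (\<Sum>x\<in>S. (exp x * w x + exp (-x) * w x) / 2)"
        unfolding c_def by (rule sum.cong) (simp_all add: distrib_right)
      also have "\<dots> = ((\<Sum>x\<in>S. exp x * w x) + (\<Sum>x\<in>S. exp (-x) * w x)) / 2"
        by (simp add: sum_divide_distrib[symmetric] sum.distrib)
      finally show ?thesis .
    qed
    then show ?thesis using e1 e2 by simp
  qed
  have low: "c x \<le> s x + 1" for x
  proof -
    show ?thesis unfolding s_def c_def
      by (rule low_aux) (simp_all add: exp_minus)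
  qed
  have part1: "1 - total_mass w \<le> T w"
  proof -
    have "1 = (\<Sum>x\<in>S. c x * w x)" using csum by simp
    also have "\<dots> \<le> (\<Sum>x\<in>S. (s x + 1) * w x)"
    proof (rule sum_mono)
      fix x
      note low[of x]
      then show "c x * w x \<le> (s x + 1) * w x" using wpos[of x] by (rule mult_right_mono)
    qed
    also have "\<dots> = T w + total_mass w" unfolding Tw m
      by (simp add: algebra_simps sum.distrib)
    finally show ?thesis by simp
  qed
  have cs: "sqrt (1 + (s x)^2) = c x" for x
  proof -
    have "1 + (s x)^2 = (c x)^2"
      unfolding s_def c_def by (rule sq_aux) (simp add: exp_minus)
    moreover have "c x \<ge> 0" unfolding c_def by (simp add: add_nonneg_nonneg)
    ultimately show ?thesis by simp
  qed
  have sumC: "(\<Sum>x\<in>S. Complex (w x) (s x * w x)) = Complex (\<Sum>x\<in>S. w x) (\<Sum>x\<in>S. s x * w x)"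
    by (rule complex_eqI) (simp_all add: Re_sum Im_sum)
  have "sqrt ((total_mass w)^2 + (T w)^2) = norm (\<Sum>x\<in>S. Complex (w x) (s x * w x))"
    unfolding sumC m Tw by (simp add: cmod_def)
  also have "\<dots> \<le> (\<Sum>x\<in>S. norm (Complex (w x) (s x * w x)))"
    by (rule norm_sum)
  also have "\<dots> = (\<Sum>x\<in>S. c x * w x)"
  proof (rule sum.cong)
    fix x
    have "norm (Complex (w x) (s x * w x)) = sqrt ((w x)^2 * (1 + (s x)^2))"
      by (rule norm_aux)
    also have "\<dots> = w x * c x" using wpos[of x] cs[of x] by (simp add: real_sqrt_mult)
    finally show "norm (Complex (w x) (s x * w x)) = c x * w x" by simp
  qed simp
  finally have "sqrt ((total_mass w)^2 + (T w)^2) \<le> 1" using csum by simp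
  then have "(total_mass w)^2 + (T w)^2 \<le> 1" by (simp add: real_sqrt_le_1_iff)
  then have "(T w)^2 \<le> 1 - (total_mass w)^2" by simp
  then have "sqrt ((T w)^2) \<le> sqrt (1 - (total_mass w)^2)" by (rule real_sqrt_le_mono)
  then have "T w \<le> sqrt (1 - (total_mass w)^2)" by simp
  with part1 show ?thesis by simp
qed

end
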